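(* Let $N>2$, $1<p<N$, and assume (H1)–(H4). For $a>0$ let $v_a$ be the solution on $[0,T]$ of $$(|v'(t)|^{p-2}v'(t))'+h(t)f(v(t))=0,\qquad v(0)=0,\ v'(0)=a.$$ For each sufficiently large $a$ let $z_a\in(0,T)$ be any zero of $v_a$ (so $v_a(z_a)=0$). Then $|v_a'(z_a)|\to\infty$ as $a\to\infty$; equivalently, $\inf\{|v_a'(z)|: z\in(0,T),\ v_a(z)=0\}\to\infty$ as $a\to\infty$.
   Context: Standing hypotheses. $f:\mathbb{R}\setminus\{0\}\to\mathbb{R}$ is odd and locally Lipschitz, and: (H1) there is a locally Lipschitz $g_1:\mathbb{R}\to\mathbb{R}$ and $l>p-1$ with $f(u)=|u|^{l-1}u+g_1(u)$ for all large $|u|$, and $\lim_{u\to\infty}|g_1(u)|/|u|^l=0$; (H2) there is a locally Lipschitz $g_2:\mathbb{R}\to\mathbb{R}$ with $g_2(0)=0$ and $0<m<1$ such that $f(u)=-\frac{1}{|u|^{m-1}u}+g_2(u)$ for all small $|u|\neq 0$; (H3) $f$ has a unique positive zero $\beta$, with $f<0$ on $(0,\beta)$ and $f>0$ on $(\beta,\infty)$; (H4) $K>0$ and $K'$ are continuous on $[R,\infty)$ (for a fixed $R>0$), $\frac{rK'(r)}{K(r)}>-\frac{(N-1)p}{p-1}$ on $[R,\infty)$, and there are constants $K_0,K_1>0$ with $\frac{K_0}{r^{\alpha}}\le K(r)\le \frac{K_1}{r^{\alpha_1}}$ on $[R,\infty)$, where $N+\frac{m(N-p)}{p-1}<\alpha_1\le\alpha<2(N-1)$.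 Notation: $T=R^{\frac{p-N}{p-1}}$ and, for $0<t\le T$, $h(t)=\left(\frac{N-p}{p-1}\right)^{-p}t^{\frac{p(N-1)}{p-N}}K\!\left(t^{\frac{p-1}{p-N}}\right)>0$. A solution of the initial value problem on an interval $[0,d]$ means $v\in C^1[0,d]$ such that $t\mapsto h(t)f(v(t))$ is integrable on $(0,t)$ for each $t\le d$ and $|v'(t)|^{p-2}v'(t)=a^{p-1}-\int_0^t h(s)f(v(s))\,ds$, $v(0)=0$; it exists uniquely on $[0,T]$ for each $a>0$. *)

theory Defs
  imports "HOL-Analysis.Analysis"
begin

definition loc_lipschitz_on :: "real set \<Rightarrow> (real \<Rightarrow> real) \<Rightarrow> bool" where
  "loc_lipschitz_on S g \<longleftrightarrow> (\<forall>C. compact C \<and> C \<subseteq> S \<longrightarrow> (\<exists>L. L-lipschitz_on C g))"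

definition hw :: "nat \<Rightarrow> real \<Rightarrow> (real \<Rightarrow> real) \<Rightarrow> real \<Rightarrow> real" where
  "hw N p K t = ((real N - p) / (p - 1)) powr (-p) * t powr (p * (real N - 1) / (p - real N))
                 * K (t powr ((p - 1) / (p - real N)))"

definition ivp_solution ::
  "nat \<Rightarrow> real \<Rightarrow> (real \<Rightarrow> real) \<Rightarrow> (real \<Rightarrow> real) \<Rightarrow> real \<Rightarrow> real
    \<Rightarrow> (real \<Rightarrow> real) \<Rightarrow> (real \<Rightarrow> real) \<Rightarrow> bool" where
  "ivp_solution N p K f a d v v' \<longleftrightarrow>
     (\<forall>t\<in>{0..d}. (v has_real_derivative v' t) (at t within {0..d})) \<and>
     continuous_on {0..d} v' \<and>
     v 0 = 0 \<and>
     (\<forall>t\<in>{0<..d}. (\<lambda>s. hw N p K s * f (v s)) absolutely_integrable_on {0..t}) \<and>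
     (\<forall>t\<in>{0..d}. \<bar>v' t\<bar> powr (p - 2) * v' t
                  = a powr (p - 1) - integral {0..t} (\<lambda>s. hw N p K s * f (v s)))"

end

theory Submission
  imports Defs
begin

lemma abs_powr_deriv:
  fixes q x :: real
  assumes q: "q > 1"
  shows "((\<lambda>x. \<bar>x\<bar> powr q) has_real_derivative q * (\<bar>x\<bar> powr (q-2) * x)) (at x)"
proof -
  consider "x > 0" | "x < 0" | "x = 0" by linarith
  then show ?thesis
  proof cases
    case 1
    have ev: "eventually (\<lambda>y. \<bar>y\<bar> powr q = y powr q) (nhds x)"
      using eventually_nhds_in_open[of "{0<..}" x] 1 by (auto elim!: eventually_mono)
    have d: "((\<lambda>y. y powr q) has_real_derivative q * x powr (q-1)) (at x)"
      using has_real_derivative_powr[OF 1] .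
    have e: "q * x powr (q-1) = q * (\<bar>x\<bar> powr (q-2) * x)"
      using 1 by (simp add: powr_diff powr_add field_simps powr_minus power2_eq_square)
    show ?thesis
      using d e DERIV_cong_ev[OF refl ev refl] by simp
  next
    case 2
    have ev: "eventually (\<lambda>y. \<bar>y\<bar> powr q = (-y) powr q) (nhds x)"
      using eventually_nhds_in_open[of "{..<0}" x] 2 by (auto elim!: eventually_mono)
    have d0: "((\<lambda>y. y powr q) has_real_derivative q * (-x) powr (q-1)) (at (-x))"
      using has_real_derivative_powr 2 by simp
    have d: "((\<lambda>y. (-y) powr q) has_real_derivative q * (-x) powr (q-1) * (-1)) (at x)"
    proof -
      have u: "(uminus has_real_derivative (-1)) (at x)" by (auto intro!: derivative_eq_intros)
      from DERIV_chain2[of "\<lambda>y. y powr q" _ uminus x, OF _ u] d0 show ?thesis by simp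
    qed
    have e: "q * (-x) powr (q-1) * (-1) = q * (\<bar>x\<bar> powr (q-2) * x)"
      using 2 by (simp add: powr_diff field_simps power2_eq_square)
    show ?thesis
      using d e DERIV_cong_ev[OF refl ev refl] by simp
  next
    case 3
    have lim: "((\<lambda>h. \<bar>h\<bar> powr (q-1)) \<longlongrightarrow> 0) (at 0)"
    proof -
      have "((\<lambda>h. \<bar>h\<bar> powr (q-1)) \<longlongrightarrow> \<bar>0\<bar> powr (q-1)) (at (0::real))"
        using q by (intro tendsto_intros) auto
      then show ?thesis using q by simp
    qed
    have "((\<lambda>h. (\<bar>0 + h\<bar> powr q - \<bar>0\<bar> powr q) / h) \<longlongrightarrow> 0) (at 0)"
    proof (rule tendsto_norm_zero_cancel)
      have "eventually (\<lambda>h. norm ((\<bar>0 + h\<bar> powr q - \<bar>0\<bar> powr q) / h) = \<bar>h\<bar> powr (q-1)) (at (0::real))"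
      proof -
        have "\<forall>h::real. h \<noteq> 0 \<longrightarrow> norm ((\<bar>0 + h\<bar> powr q - \<bar>0\<bar> powr q) / h) = \<bar>h\<bar> powr (q-1)"
          using q by (simp add: powr_diff abs_divide)
        then show ?thesis unfolding eventually_at_filter by (intro always_eventually) auto
      qed
      note ev = this
      show "((\<lambda>h. norm ((\<bar>0 + h\<bar> powr q - \<bar>0\<bar> powr q) / h)) \<longlongrightarrow> 0) (at 0)"
        using lim ev Lim_transform_eventually[of "\<lambda>h. \<bar>h\<bar> powr (q-1)"] eventually_mono
        by (smt (verit, ccfv_SIG))
    qed
    then show ?thesis using 3 by (simp add: DERIV_def)
  qed
qed


lemma loc_lip_isCont:
  assumes "open S" "loc_lipschitz_on S g" "x \<in> S"
  shows "isCont g x"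
proof -
  obtain e where e: "e > 0" "cball x e \<subseteq> S" using assms open_contains_cball by blast
  then obtain L where "L-lipschitz_on (cball x e) g"
    using assms(2) compact_cball unfolding loc_lipschitz_on_def by blast
  then have "continuous_on (cball x e) g" by (rule lipschitz_on_continuous_on)
  then show ?thesis using e continuous_on_interior[of "cball x e" g x] by auto
qed

lemma integral_deriv_interior:
  fixes g :: "real \<Rightarrow> real"
  assumes "g integrable_on {a..b}" "a \<le> c" "c < x" "x < d" "d \<le> b" "continuous_on {c..d} g"
  shows "((\<lambda>y. integral {a..y} g) has_real_derivative g x) (at x)"
proof -
  have d1: "((\<lambda>y. integral {c..y} g) has_real_derivative g x) (at x within {c..d})"
    using integral_has_real_derivative[OF assms(6)] assms by auto
  have "at x within {c..d} = at x" using assms by (intro at_within_interior) auto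
  with d1 have d2: "((\<lambda>y. integral {c..y} g) has_real_derivative g x) (at x)" by simp
  have d3: "((\<lambda>y. integral {a..c} g + integral {c..y} g) has_real_derivative g x) (at x)"
    using DERIV_add[OF DERIV_const d2] by simp
  show ?thesis
  proof (rule has_field_derivative_transform_within_open[OF d3, of "{c<..<d}"])
    fix y assume y: "y \<in> {c<..<d}"
    have "g integrable_on {a..y}"
      using assms y by (intro integrable_on_subinterval[OF assms(1)]) auto
    then show "integral {a..c} g + integral {c..y} g = integral {a..y} g"
      using y assms by (intro Henstock_Kurzweil_Integration.integral_combine) auto
  qed (use assms in auto)
qed

lemma phi_rel:
  fixes x p :: real
  assumes p: "p > 1"
  shows "\<bar>\<bar>x\<bar> powr (p-2) * x\<bar> powr (p/(p-1)) = \<bar>x\<bar> powr p"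
    and "\<bar>\<bar>x\<bar> powr (p-2) * x\<bar> powr (p/(p-1) - 2) * (\<bar>x\<bar> powr (p-2) * x) = x"
    and "\<bar>x\<bar> powr (p-2) * x > 0 \<longleftrightarrow> x > 0"
    and "\<bar>x\<bar> powr (p-2) * x = 0 \<longleftrightarrow> x = 0"
proof -
  show "\<bar>x\<bar> powr (p-2) * x > 0 \<longleftrightarrow> x > 0"
    by (cases "x = 0") (auto simp: zero_less_mult_iff)
  show "\<bar>x\<bar> powr (p-2) * x = 0 \<longleftrightarrow> x = 0" by simp
  have ab: "\<bar>\<bar>x\<bar> powr (p-2) * x\<bar> = \<bar>x\<bar> powr (p-1)"
  proof (cases "x = 0")
    case False
    have "\<bar>x\<bar> powr (p-2) * \<bar>x\<bar> = \<bar>x\<bar> powr (p-2) * \<bar>x\<bar> powr 1" by simp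
    also have "\<dots> = \<bar>x\<bar> powr (p-2+1)" by (rule powr_add[symmetric])
    also have "p - 2 + 1 = p - 1" by simp
    finally have "\<bar>x\<bar> powr (p-2) * \<bar>x\<bar> = \<bar>x\<bar> powr (p-1)" .
    then show ?thesis by (simp add: abs_mult)
  qed simp
  show "\<bar>\<bar>x\<bar> powr (p-2) * x\<bar> powr (p/(p-1)) = \<bar>x\<bar> powr p"
    unfolding ab using p by (simp add: powr_powr)
  show "\<bar>\<bar>x\<bar> powr (p-2) * x\<bar> powr (p/(p-1) - 2) * (\<bar>x\<bar> powr (p-2) * x) = x"
  proof (cases "x = 0")
    case False
    have e: "(p - 1) * (p/(p-1) - 2) = 2 - p" using p by (simp add: field_simps)
    have "\<bar>\<bar>x\<bar> powr (p-2) * x\<bar> powr (p/(p-1) - 2) = \<bar>x\<bar> powr (2 - p)"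
      unfolding ab powr_powr e ..
    then have "\<bar>\<bar>x\<bar> powr (p-2) * x\<bar> powr (p/(p-1) - 2) * (\<bar>x\<bar> powr (p-2) * x)
        = (\<bar>x\<bar> powr (2 - p) * \<bar>x\<bar> powr (p-2)) * x" by simp
    also have "\<bar>x\<bar> powr (2 - p) * \<bar>x\<bar> powr (p-2) = 1" using False by (simp add: powr_add[symmetric])
    finally show ?thesis by simp
  qed simp
qed

locale setting =
  fixes N :: nat and p l m \<beta> R K0 K1 \<alpha> \<alpha>1 :: real
    and f g1 g2 K K' :: "real \<Rightarrow> real"
  assumes N: "N > 2" and p: "1 < p" "p < real N"
    and f_odd: "\<forall>u. u \<noteq> 0 \<longrightarrow> f (- u) = - f u"
    and f_lip: "loc_lipschitz_on (UNIV - {0}) f"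
    and H1_g1: "loc_lipschitz_on UNIV g1" and H1_l: "l > p - 1"
    and H1_eq: "\<exists>U. \<forall>u. \<bar>u\<bar> \<ge> U \<longrightarrow> f u = \<bar>u\<bar> powr (l - 1) * u + g1 u"
    and H1_lim: "((\<lambda>u. \<bar>g1 u\<bar> / \<bar>u\<bar> powr l) \<longlongrightarrow> 0) at_top"
    and H2_g2: "loc_lipschitz_on UNIV g2" "g2 0 = 0" and H2_m: "0 < m" "m < 1"
    and H2_eq: "\<exists>\<delta>>0. \<forall>u. u \<noteq> 0 \<and> \<bar>u\<bar> < \<delta> \<longrightarrow>
                   f u = - 1 / (\<bar>u\<bar> powr (m - 1) * u) + g2 u"
    and H3: "\<beta> > 0" "f \<beta> = 0" "\<forall>u>0. f u = 0 \<longrightarrow> u = \<beta>"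
            "\<forall>u. 0 < u \<and> u < \<beta> \<longrightarrow> f u < 0" "\<forall>u>\<beta>. f u > 0"
    and R: "R > 0"
    and K_deriv: "\<forall>r\<in>{R..}. (K has_real_derivative K' r) (at r within {R..})"
    and K_cont: "continuous_on {R..} K" "continuous_on {R..} K'"
    and K_pos: "\<forall>r\<in>{R..}. K r > 0"
    and K_ratio: "\<forall>r\<in>{R..}. r * K' r / K r > - ((real N - 1) * p / (p - 1))"
    and K_bounds: "K0 > 0" "K1 > 0"
        "\<forall>r\<in>{R..}. K0 / r powr \<alpha> \<le> K r \<and> K r \<le> K1 / r powr \<alpha>1"
    and alphas: "real N + m * (real N - p) / (p - 1) < \<alpha>1" "\<alpha>1 \<le> \<alpha>"
                "\<alpha> < 2 * (real N - 1)"
begin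

definition "T = R powr ((p - real N) / (p - 1))"
definition "Bx = (p - 1) / (p - real N)"
definition "Ax = p * (real N - 1) / (p - real N)"
definition "c0 = ((real N - p) / (p - 1)) powr (-p)"

lemma hw_eq: "hw N p K t = c0 * t powr Ax * K (t powr Bx)"
  unfolding hw_def c0_def Ax_def Bx_def by simp

lemma Bx_neg: "Bx < 0" unfolding Bx_def using p by (simp add: divide_pos_neg)
lemma Ax_neg: "Ax < 0" unfolding Ax_def using p N by (simp add: divide_pos_neg)
lemma c0_pos: "c0 > 0" unfolding c0_def using p by simp
lemma T_pos: "T > 0" unfolding T_def using R by simp

lemma TB: "T powr Bx = R"
  unfolding T_def Bx_def using R p by (simp add: powr_powr)

lemma tB_ge: assumes "0 < t" "t \<le> T" shows "R \<le> t powr Bx"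
proof -
  have "T powr Bx \<le> t powr Bx" using powr_mono2'[OF less_imp_le[OF Bx_neg] assms(1) assms(2)] .
  then show ?thesis using TB by simp
qed

lemma tB_gt: assumes "0 < t" "t < T" shows "R < t powr Bx"
proof -
  have "T powr Bx < t powr Bx" using assms Bx_neg T_pos
    by (simp add: powr_less_mono2_neg)
  then show ?thesis using TB by simp
qed

lemma h_pos: assumes "0 < t" "t \<le> T" shows "hw N p K t > 0"
  using tB_ge[OF assms] K_pos c0_pos assms unfolding hw_eq by simp

lemma h0: "hw N p K 0 = 0" unfolding hw_eq by simp

lemma h_cont: "continuous_on {0<..T} (hw N p K)"
proof -
  have k: "continuous_on {0<..T} (\<lambda>t. K (t powr Bx))"
  proof (rule continuous_on_compose2[OF K_cont(1)])
    show "continuous_on {0<..T} (\<lambda>t. t powr Bx)" by (intro continuous_intros) auto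
    show "(\<lambda>t. t powr Bx) ` {0<..T} \<subseteq> {R..}" using tB_ge by auto
  qed
  show ?thesis unfolding hw_eq
    by (intro continuous_intros k) auto
qed

lemma h_deriv:
  assumes t: "0 < t" "t < T"
  shows "\<exists>d. (hw N p K has_real_derivative d) (at t) \<and> d \<le> 0"
proof -
  define r where "r = t powr Bx"
  have rR: "R < r" using tB_gt[OF t] r_def by simp
  have Kd: "(K has_real_derivative K' r) (at r)"
  proof -
    have "(K has_real_derivative K' r) (at r within {R..})" using K_deriv rR by auto
    moreover have "at r within {R..} = at r"
      using rR by (intro at_within_interior) auto
    ultimately show ?thesis by simp
  qed
  have rd: "((\<lambda>t. t powr Bx) has_real_derivative Bx * t powr (Bx - 1)) (at t)"
    using has_real_derivative_powr[OF t(1)] .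
  have Kcd: "((\<lambda>t. K (t powr Bx)) has_real_derivative K' r * (Bx * t powr (Bx - 1))) (at t)"
    using DERIV_chain2[OF Kd[unfolded r_def] rd] r_def by simp
  have ad: "((\<lambda>t. t powr Ax) has_real_derivative Ax * t powr (Ax - 1)) (at t)"
    using has_real_derivative_powr[OF t(1)] .
  define d where "d = c0 * (Ax * t powr (Ax - 1) * K r + t powr Ax * (K' r * (Bx * t powr (Bx - 1))))"
  have hd: "(hw N p K has_real_derivative d) (at t)"
  proof -
    have c: "((\<lambda>t. c0 * t powr Ax) has_real_derivative c0 * (Ax * t powr (Ax - 1))) (at t)"
      using DERIV_cmult[OF ad] .
    have "((\<lambda>t. c0 * t powr Ax * K (t powr Bx)) has_real_derivative d) (at t)"
      using DERIV_mult[OF c Kcd] unfolding d_def r_def by (simp add: algebra_simps)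
    then show ?thesis unfolding hw_eq[abs_def] .
  qed
  have Kr: "K r > 0" using K_pos rR by auto
  have ratio: "r * K' r / K r > - ((real N - 1) * p / (p - 1))" using K_ratio rR by auto
  have key: "Ax * K r + Bx * (r * K' r) < 0"
  proof -
    have "Bx * (r * K' r / K r) < Bx * (- ((real N - 1) * p / (p - 1)))"
      using mult_strict_left_mono_neg[OF ratio Bx_neg] .
    also have "\<dots> = - Ax"
    proof -
      show ?thesis unfolding Bx_def Ax_def using p by (simp add: divide_simps)
    qed
    finally have "Ax + Bx * (r * K' r / K r) < 0" by simp
    then have "K r * (Ax + Bx * (r * K' r / K r)) < 0" using Kr by (simp add: mult_pos_neg)
    moreover have "K r * (Ax + Bx * (r * K' r / K r)) = Ax * K r + Bx * (r * K' r)"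
      using Kr by (simp add: algebra_simps)
    ultimately show ?thesis by simp
  qed
  have "d = c0 * t powr (Ax - 1) * (Ax * K r + Bx * (r * K' r))"
    unfolding d_def r_def using t(1) by (simp add: powr_diff algebra_simps)
  also have "\<dots> \<le> 0" using key c0_pos t(1)
    by (intro mult_nonneg_nonpos) auto
  finally show ?thesis using hd by blast
qed

lemma h_mono:
  assumes "0 < s" "s \<le> t" "t \<le> T"
  shows "hw N p K t \<le> hw N p K s"
proof -
  have "- hw N p K s \<le> - hw N p K t"
  proof (rule DERIV_nonneg_imp_increasing_open[OF assms(2)])
    fix x assume x: "s < x" "x < t"
    obtain d where "(hw N p K has_real_derivative d) (at x)" "d \<le> 0"
      using h_deriv[of x] x assms by auto
    then show "\<exists>y. ((\<lambda>x. - hw N p K x) has_real_derivative y) (at x) \<and> 0 \<le> y"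
      by (intro exI[of _ "-d"]) (auto intro: derivative_eq_intros)
  next
    show "continuous_on {s..t} (\<lambda>x. - hw N p K x)"
      using h_cont assms by (intro continuous_intros) (auto elim: continuous_on_subset)
  qed
  then show ?thesis by simp
qed

definition "e1 = Ax - Bx * \<alpha>1"

lemma e1_gt: "e1 > -1"
proof -
  have a1: "\<alpha>1 > real N"
    using alphas(1) H2_m p by (smt (verit) divide_nonneg_pos mult_nonneg_nonneg)
  have "(p - 1) * \<alpha>1 > (p - 1) * real N" using a1 p by simp
  then have "p * (real N - 1) - (p - 1) * \<alpha>1 < real N - p" by (simp add: algebra_simps)
  then have "(p * (real N - 1) - (p - 1) * \<alpha>1) / (p - real N) > (real N - p) / (p - real N)"
    using p by (intro divide_strict_right_mono_neg) auto
  moreover have "(real N - p) / (p - real N) = -1" using p by (simp add: field_simps)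
  moreover have "e1 = (p * (real N - 1) - (p - 1) * \<alpha>1) / (p - real N)"
  proof -
    have a: "p - real N \<noteq> 0" using p by simp
    have "Bx * \<alpha>1 = (p - 1) * \<alpha>1 / (p - real N)" unfolding Bx_def by simp
    then show ?thesis unfolding e1_def Ax_def using a by (simp add: diff_divide_distrib)
  qed
  ultimately show ?thesis by simp
qed

lemma h_bound:
  assumes "0 < t" "t \<le> T"
  shows "hw N p K t \<le> c0 * K1 * t powr e1"
proof -
  have rR: "R \<le> t powr Bx" using tB_ge[OF assms] .
  have "K (t powr Bx) \<le> K1 / (t powr Bx) powr \<alpha>1" using K_bounds(3) rR by auto
  also have "\<dots> = K1 * t powr (- (Bx * \<alpha>1))" using assms(1) by (simp add: powr_powr powr_minus divide_inverse)
  finally have "c0 * t powr Ax * K (t powr Bx) \<le> c0 * t powr Ax * (K1 * t powr (- (Bx * \<alpha>1)))"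
    using c0_pos by (intro mult_left_mono) auto
  also have "\<dots> = c0 * K1 * t powr e1" unfolding e1_def using assms(1)
    by (simp add: powr_add[symmetric] algebra_simps)
  finally show ?thesis unfolding hw_eq .
qed

lemma h_integrable: "hw N p K integrable_on {0..T}"
proof -
  have "hw N p K integrable_on {0<..T}"
  proof (rule measurable_bounded_by_integrable_imp_integrable_real)
    show "hw N p K \<in> borel_measurable (lebesgue_on {0<..T})"
      using h_cont by (rule continuous_imp_measurable_on_sets_lebesgue) auto
    show "(\<lambda>t. c0 * K1 * t powr e1) integrable_on {0<..T}"
      using integrable_cmul[OF integrable_on_powr_from_0'[OF e1_gt, of T], of "c0*K1"] T_pos by simp
    show "\<bar>hw N p K x\<bar> \<le> c0 * K1 * x powr e1" if "x \<in> {0<..T}" for x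
      using h_bound[of x] h_pos[of x] that by auto
  qed auto
  then show ?thesis
    by (rule integrable_spike_set) (auto intro: negligible_subset[of "{0}"])
qed

lemma f_cont: "u \<noteq> 0 \<Longrightarrow> isCont f u"
  using loc_lip_isCont[OF _ f_lip] by auto

lemma g2_cont: "isCont g2 u"
  using loc_lip_isCont[OF _ H2_g2(1)] by auto

lemma f_cont_on: "0 \<notin> S \<Longrightarrow> continuous_on S f"
  using f_cont by (metis continuous_at_imp_continuous_on)

lemma f_int0: "\<exists>d>0. f integrable_on {0..d}"
proof -
  obtain \<delta> where \<delta>: "\<delta> > 0" "\<forall>u. u \<noteq> 0 \<and> \<bar>u\<bar> < \<delta> \<longrightarrow> f u = - 1 / (\<bar>u\<bar> powr (m - 1) * u) + g2 u"
    using H2_eq by auto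
  define d where "d = \<delta> / 2"
  have d: "d > 0" "d < \<delta>" using \<delta> d_def by auto
  have i1: "(\<lambda>x. x powr (-m)) integrable_on {0..d}"
    using integrable_on_powr_from_0[of "-m" d] H2_m d by auto
  have i2: "g2 integrable_on {0..d}"
    using g2_cont by (intro integrable_continuous_interval continuous_at_imp_continuous_on) auto
  have i3: "(\<lambda>x. - (x powr (-m)) + g2 x) integrable_on {0..d}"
    using integrable_add[OF integrable_neg[OF i1] i2] by simp
  have "f integrable_on {0..d}"
  proof (rule integrable_spike_finite[OF _ _ i3, of "{0}"])
    fix x assume x: "x \<in> {0..d} - {0}"
    then have "x > 0" "x < \<delta>" using d by auto
    then have "f x = - 1 / (x powr (m - 1) * x) + g2 x" using \<delta>(2) by auto
    also have "x powr (m - 1) * x = x powr m" using \<open>x > 0\<close> by (simp add: powr_diff)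
    finally show "f x = - (x powr (-m)) + g2 x" using \<open>x > 0\<close> by (simp add: powr_minus divide_inverse)
  qed auto
  then show ?thesis using d by auto
qed

lemma f_int: fixes c :: real assumes "0 \<le> c" shows "f integrable_on {0..c}"
proof -
  obtain d where d: "d > 0" "f integrable_on {0..d}" using f_int0 by auto
  show ?thesis
  proof (cases "c \<le> d")
    case True
    then show ?thesis using d assms by (intro integrable_on_subinterval[OF d(2)]) auto
  next
    case False
    have "f integrable_on {d..c}"
      using d by (intro integrable_continuous_interval f_cont_on) auto
    then show ?thesis using Henstock_Kurzweil_Integration.integrable_combine[where a=0 and c=d and b=c and f=f] d False by auto
  qed
qed

definition "F0 x = integral {0..x} f"
definition "G u = F0 \<bar>u\<bar>"

lemma F0_deriv: "x > 0 \<Longrightarrow> (F0 has_real_derivative f x) (at x)"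
  unfolding F0_def[abs_def]
  by (rule integral_deriv_interior[OF f_int[of "2*x"], of "x/2" x "3/2*x"])
     (auto intro!: f_cont_on)

lemma G0: "G 0 = 0" unfolding G_def F0_def by simp

lemma G_deriv: assumes "u \<noteq> 0" shows "(G has_real_derivative f u) (at u)"
proof (cases "u > 0")
  case True
  show ?thesis
  proof (rule has_field_derivative_transform_within_open[OF F0_deriv[OF True], of "{0<..}"])
    show "\<And>x. x \<in> {0<..} \<Longrightarrow> F0 x = G x" unfolding G_def by auto
  qed (use True in auto)
next
  case False
  then have u: "u < 0" using assms by auto
  have d0: "(F0 has_real_derivative f (-u)) (at (-u))" using F0_deriv u by auto
  have d1: "((\<lambda>x. F0 (-x)) has_real_derivative f (-u) * (-1)) (at u)"
  proof -
    have un: "(uminus has_real_derivative (-1)) (at u)" by (auto intro!: derivative_eq_intros)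
    from DERIV_chain2[of F0 _ uminus u, OF _ un] d0 show ?thesis by simp
  qed
  have e: "f (-u) * (-1) = f u" using f_odd u by auto
  show ?thesis
  proof (rule has_field_derivative_transform_within_open[OF d1[unfolded e], of "{..<0}"])
    show "\<And>x. x \<in> {..<0} \<Longrightarrow> F0 (-x) = G x" unfolding G_def by auto
  qed (use u in auto)
qed

lemma G_cont: "continuous_on UNIV G"
proof -
  have "continuous_on {-c..c} G" if c: "c > 0" for c
  proof -
    have "continuous_on {0..c} F0" unfolding F0_def[abs_def]
      using indefinite_integral_continuous_1[OF f_int[of c]] c by simp
    then show ?thesis unfolding G_def[abs_def]
      by (rule continuous_on_compose2[of _ _ _ abs]) (auto intro!: continuous_intros)
  qed
  then have "isCont G x" for x
    using continuous_on_interior[of "{-(\<bar>x\<bar>+1)..\<bar>x\<bar>+1}" G x]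
    by (smt (verit) atLeastAtMost_iff interior_atLeastAtMost_real greaterThanLessThan_iff)
  then show ?thesis by (simp add: continuous_at_imp_continuous_on)
qed

lemma f_upper: "\<exists>C\<ge>0. \<forall>u. 0 < u \<and> u \<le> \<Lambda> \<longrightarrow> f u \<le> C"
proof -
  define S where "S = {\<beta>..max \<beta> \<Lambda>}"
  have "compact (f ` S)" unfolding S_def
    using H3(1) by (intro compact_continuous_image f_cont_on) auto
  then obtain C' where C': "\<forall>y\<in>f ` S. norm y \<le> C'" using compact_imp_bounded bounded_iff by metis
  show ?thesis
  proof (intro exI[of _ "max C' 0"] conjI allI impI)
    fix u assume u: "0 < u \<and> u \<le> \<Lambda>"
    show "f u \<le> max C' 0"
    proof (cases "u < \<beta>")
      case True then show ?thesis using H3(4) u by force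
    next
      case False
      then have "u \<in> S" unfolding S_def using u by auto
      then show ?thesis using C' by force
    qed
  qed simp
qed

lemma f_large: "\<exists>U1>0. \<forall>u\<ge>U1. f u \<ge> 1"
proof -
  obtain U where U: "\<forall>u. \<bar>u\<bar> \<ge> U \<longrightarrow> f u = \<bar>u\<bar> powr (l - 1) * u + g1 u" using H1_eq by auto
  have "eventually (\<lambda>u. \<bar>g1 u\<bar> / \<bar>u\<bar> powr l < 1/2) at_top"
    using H1_lim by (rule order_tendstoD) simp
  then obtain U2 where U2: "\<forall>u\<ge>U2. \<bar>g1 u\<bar> / \<bar>u\<bar> powr l < 1/2"
    unfolding eventually_at_top_linorder by auto
  have l0: "l > 0" using H1_l p by simp
  define U1 where "U1 = max (max U U2) (max 1 (2 powr (1/l)))"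
  have "U1 > 0" unfolding U1_def by simp
  moreover have "f u \<ge> 1" if u: "u \<ge> U1" for u
  proof -
    have u0: "u > 0" using u unfolding U1_def by simp
    have fu: "f u = u powr l + g1 u" using U u u0 unfolding U1_def
      by (auto simp: powr_diff)
    have "\<bar>g1 u\<bar> / u powr l < 1/2" using U2 u u0 unfolding U1_def by auto
    then have g: "\<bar>g1 u\<bar> < u powr l / 2" using u0 by (simp add: divide_simps)
    have "(2 powr (1/l)) powr l \<le> u powr l"
      using u l0 unfolding U1_def by (intro powr_mono2) auto
    then have "2 \<le> u powr l" using l0 by (simp add: powr_powr)
    then show ?thesis using fu g by linarith
  qed
  ultimately show ?thesis by blast
qed

lemma G_large: "\<exists>\<Lambda>>0. \<forall>u\<ge>\<Lambda>. G u \<ge> M"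
proof -
  obtain U1 where U1: "U1 > 0" "\<forall>u\<ge>U1. f u \<ge> 1" using f_large by auto
  define \<Lambda> where "\<Lambda> = max U1 (U1 + M - F0 U1)"
  have "G u \<ge> M" if u: "u \<ge> \<Lambda>" for u
  proof -
    have uU: "u \<ge> U1" using u unfolding \<Lambda>_def by simp
    have fi: "f integrable_on {0..u}" using f_int[of u] uU U1 by simp
    have fi2: "f integrable_on {U1..u}" using fi U1 uU by (intro integrable_on_subinterval[OF fi]) auto
    have "G u = F0 U1 + integral {U1..u} f"
      unfolding G_def F0_def using uU U1 Henstock_Kurzweil_Integration.integral_combine[OF _ _ fi, of U1] by simp
    moreover have "integral {U1..u} (\<lambda>x. 1) \<le> integral {U1..u} f"
      using U1 fi2 by (intro integral_le) auto
    moreover have "integral {U1..u} (\<lambda>x. 1::real) = u - U1" using uU by simp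
    ultimately show ?thesis using u unfolding \<Lambda>_def by linarith
  qed
  moreover have "\<Lambda> > 0" using U1 unfolding \<Lambda>_def by simp
  ultimately show ?thesis by blast
qed

end

locale sol = setting +
  fixes a :: real and v v' :: "real \<Rightarrow> real"
  assumes a_pos: "a > 0" and S: "ivp_solution N p K f a T v v'"
begin

abbreviation "h \<equiv> hw N p K"
definition "q = p / (p - 1)"
definition "phi t = a powr (p - 1) - integral {0..t} (\<lambda>s. h s * f (v s))"
definition "E t = \<bar>phi t\<bar> powr q / (q * h t) + G (v t)"

lemma q_gt: "q > 1" unfolding q_def using p by simp

lemma vd: "t \<in> {0..T} \<Longrightarrow> (v has_real_derivative v' t) (at t within {0..T})"
  using S unfolding ivp_solution_def by auto

lemma vd_at: assumes "0 < t" "t < T" shows "(v has_real_derivative v' t) (at t)"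
proof -
  have "at t within {0..T} = at t" using assms by (intro at_within_interior) auto
  then show ?thesis using vd[of t] assms by auto
qed

lemma v_cont: "continuous_on {0..T} v"
  using vd by (metis DERIV_continuous continuous_on_eq_continuous_within)

lemma v_isCont: "0 < t \<Longrightarrow> t < T \<Longrightarrow> isCont v t"
  using vd_at DERIV_isCont by blast

lemma v0: "v 0 = 0" using S unfolding ivp_solution_def by auto

lemma int_T: "(\<lambda>s. h s * f (v s)) integrable_on {0..T}"
  using S T_pos unfolding ivp_solution_def by (auto dest: set_lebesgue_integral_eq_integral(1))

lemma phi_eq: "t \<in> {0..T} \<Longrightarrow> \<bar>v' t\<bar> powr (p - 2) * v' t = phi t"
  using S unfolding ivp_solution_def phi_def by auto

lemma phi_cont: "continuous_on {0..T} phi"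
  unfolding phi_def[abs_def]
  by (intro continuous_intros indefinite_integral_continuous_1 int_T)

lemma phi_deriv:
  assumes t: "0 < t" "t < T" "v t \<noteq> 0"
  shows "(phi has_real_derivative - (h t * f (v t))) (at t)"
proof -
  obtain e where e: "e > 0" "\<forall>s. dist s t < e \<longrightarrow> v s \<noteq> 0"
    using continuous_at_avoid[OF v_isCont[OF t(1,2)] t(3)] by (auto simp: dist_commute)
  define c where "c = max (t - e/2) (t/2)"
  define d where "d = min (t + e/2) ((t + T)/2)"
  have cd: "0 < c" "c < t" "t < d" "d < T" unfolding c_def d_def using t e by (auto simp: min_def)
  have vnz: "v s \<noteq> 0" if "s \<in> {c..d}" for s
  proof -
    have "\<bar>s - t\<bar> < e" using that e(1) unfolding c_def d_def by auto
    then show ?thesis using e(2) unfolding dist_real_def by auto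
  qed
  have cont: "continuous_on {c..d} (\<lambda>s. h s * f (v s))"
  proof (intro continuous_intros)
    show "continuous_on {c..d} h" by (rule continuous_on_subset[OF h_cont]) (use cd in auto)
    show "continuous_on {c..d} (\<lambda>s. f (v s))"
    proof (rule continuous_on_compose2[OF f_cont_on[of "v ` {c..d}"]])
      show "continuous_on {c..d} v" by (rule continuous_on_subset[OF v_cont]) (use cd in auto)
    qed (use vnz in auto)
  qed
  have "((\<lambda>y. integral {0..y} (\<lambda>s. h s * f (v s))) has_real_derivative h t * f (v t)) (at t)"
    by (rule integral_deriv_interior[OF int_T _ _ _ _ cont]) (use cd in auto)
  then show ?thesis unfolding phi_def[abs_def]
    by (auto intro!: derivative_eq_intros)
qed

lemma phi_v': "t \<in> {0..T} \<Longrightarrow> \<bar>phi t\<bar> powr (q - 2) * phi t = v' t"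
  using phi_rel(2)[OF p(1), of "v' t"] phi_eq[of t] unfolding q_def by simp

lemma phi_pow: "t \<in> {0..T} \<Longrightarrow> \<bar>phi t\<bar> powr q = \<bar>v' t\<bar> powr p"
  using phi_rel(1)[OF p(1), of "v' t"] phi_eq[of t] unfolding q_def by simp

lemma phi_pos: "t \<in> {0..T} \<Longrightarrow> phi t > 0 \<longleftrightarrow> v' t > 0"
  using phi_rel(3)[OF p(1), of "v' t"] phi_eq[of t] by simp

lemma phi_zero: "t \<in> {0..T} \<Longrightarrow> phi t = 0 \<longleftrightarrow> v' t = 0"
  using phi_rel(4)[OF p(1), of "v' t"] phi_eq[of t] by simp

lemma E_deriv:
  assumes t: "0 < t" "t < T" "v t \<noteq> 0"
  shows "\<exists>d\<ge>0. (E has_real_derivative d) (at t)"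
proof -
  obtain hd where hd: "(h has_real_derivative hd) (at t)" "hd \<le> 0" using h_deriv t by auto
  have q0: "q > 0" using q_gt by simp
  have ht: "h t > 0" using h_pos t by simp
  have dP: "((\<lambda>x. \<bar>x\<bar> powr q) has_real_derivative q * (\<bar>phi t\<bar> powr (q-2) * phi t)) (at (phi t))"
    using abs_powr_deriv[OF q_gt] .
  have dP2: "((\<lambda>s. \<bar>phi s\<bar> powr q) has_real_derivative q * v' t * (- (h t * f (v t)))) (at t)"
    using DERIV_chain2[OF dP phi_deriv[OF t]] phi_v'[of t] t by simp
  have dH: "((\<lambda>s. q * h s) has_real_derivative q * hd) (at t)" using DERIV_cmult[OF hd(1)] .
  have dQ: "((\<lambda>s. \<bar>phi s\<bar> powr q / (q * h s)) has_real_derivative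
      ((q * v' t * (- (h t * f (v t)))) * (q * h t) - \<bar>phi t\<bar> powr q * (q * hd)) / ((q * h t) * (q * h t))) (at t)"
    using DERIV_divide[OF dP2 dH] q0 ht by simp
  have dG: "((\<lambda>s. G (v s)) has_real_derivative f (v t) * v' t) (at t)"
    using DERIV_chain2[OF G_deriv[OF t(3)] vd_at[OF t(1,2)]] .
  define d where "d = ((q * v' t * (- (h t * f (v t)))) * (q * h t) - \<bar>phi t\<bar> powr q * (q * hd)) / ((q * h t) * (q * h t)) + f (v t) * v' t"
  have D1: "(E has_real_derivative d) (at t)"
    unfolding E_def[abs_def] d_def using DERIV_add[OF dQ dG] .
  have D2: "d = (\<bar>phi t\<bar> powr q * (- hd)) / (q * (h t * h t))"
    unfolding d_def using q0 ht by (simp add: field_simps)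
  have D3: "(\<bar>phi t\<bar> powr q * (- hd)) / (q * (h t * h t)) \<ge> 0"
    using hd(2) q0 ht by (intro divide_nonneg_pos mult_nonneg_nonneg) auto
  have "d \<ge> 0" using D2 D3 by linarith
  then show ?thesis using D1 by blast
qed

lemma E_cont: "continuous_on {0<..<T} E"
proof -
  have c1: "continuous_on {0<..<T} phi" by (rule continuous_on_subset[OF phi_cont]) auto
  have c2: "continuous_on {0<..<T} h" by (rule continuous_on_subset[OF h_cont]) auto
  have c3: "continuous_on {0<..<T} (\<lambda>t. \<bar>phi t\<bar> powr q)"
  proof (rule continuous_on_compose2[OF _ c1, of UNIV])
    show "continuous_on UNIV (\<lambda>x. \<bar>x\<bar> powr q)"
      using abs_powr_deriv[OF q_gt] by (meson DERIV_isCont continuous_at_imp_continuous_on)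
  qed auto
  have c4: "continuous_on {0<..<T} (\<lambda>t. q * h t)" using c2 by (intro continuous_intros)
  have c5: "continuous_on {0<..<T} (\<lambda>t. \<bar>phi t\<bar> powr q / (q * h t))"
    using c3 c4 q_gt h_pos by (intro continuous_on_divide) fastforce+
  have c6: "continuous_on {0<..<T} (\<lambda>t. G (v t))"
    by (rule continuous_on_compose2[OF G_cont]) (auto intro: continuous_on_subset[OF v_cont])
  show ?thesis unfolding E_def[abs_def] using c5 c6 by (intro continuous_on_add)
qed

lemma E_zero: assumes "0 < z" "z < T" "v z = 0" shows "E z = \<bar>v' z\<bar> powr p / (q * h z)"
  unfolding E_def using assms phi_pow[of z] G0 by simp

lemma E_lower: assumes "0 < t" "t < T" shows "G (v t) \<le> E t"
proof -
  have "0 \<le> \<bar>phi t\<bar> powr q / (q * h t)" using h_pos[of t] q_gt assms by simp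
  then show ?thesis unfolding E_def by simp
qed

lemma E_right:
  assumes u: "0 < u" "u < T" "v u \<noteq> 0 \<or> v' u \<noteq> 0"
  shows "\<exists>\<delta>>0. \<forall>s. u \<le> s \<and> s \<le> u + \<delta> \<longrightarrow> E u \<le> E s \<and> s < T"
proof -
  obtain \<delta>1 where d1: "\<delta>1 > 0" "\<forall>s. u < s \<and> s < u + \<delta>1 \<longrightarrow> v s \<noteq> 0"
  proof (cases "v u \<noteq> 0")
    case True
    obtain e where e: "e > 0" "\<forall>y. dist u y < e \<longrightarrow> v y \<noteq> 0"
      using continuous_at_avoid[OF v_isCont[OF u(1,2)] True] by auto
    show ?thesis
    proof (rule that[OF e(1)])
      show "\<forall>s. u < s \<and> s < u + e \<longrightarrow> v s \<noteq> 0" using e(2) by (auto simp: dist_real_def)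
    qed
  next
    case False
    then have vu: "v u = 0" "v' u \<noteq> 0" using u by auto
    show ?thesis
    proof (cases "v' u > 0")
      case True
      obtain d where d: "d > 0" "\<forall>h>0. h < d \<longrightarrow> v u < v (u + h)"
        using DERIV_pos_inc_right[OF vd_at[OF u(1,2)] True] by auto
      show ?thesis
      proof (rule that[OF d(1)], intro allI impI)
        fix s assume "u < s \<and> s < u + d"
        then show "v s \<noteq> 0" using d(2)[rule_format, of "s - u"] vu by auto
      qed
    next
      case False
      then have neg: "v' u < 0" using vu by auto
      obtain d where d: "d > 0" "\<forall>h>0. h < d \<longrightarrow> v u > v (u + h)"
        using DERIV_neg_dec_right[OF vd_at[OF u(1,2)] neg] by auto
      show ?thesis
      proof (rule that[OF d(1)], intro allI impI)
        fix s assume "u < s \<and> s < u + d"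
        then show "v s \<noteq> 0" using d(2)[rule_format, of "s - u"] vu by auto
      qed
    qed
  qed
  define \<delta> where "\<delta> = min (\<delta>1/2) ((T - u)/2)"
  have dd: "\<delta> \<le> \<delta>1/2" "\<delta> \<le> (T - u)/2" "\<delta> > 0"
    unfolding \<delta>_def using d1(1) u(2) by (simp_all only: min.cobounded1 min.cobounded2) simp
  have "T - u > 0" using u(2) by simp
  then have \<delta>3: "u + \<delta> < T" using dd(2) by (simp add: field_simps)
  have \<delta>2: "u + \<delta> < u + \<delta>1" using dd(1) d1(1) by linarith
  note \<delta> = dd(3) \<delta>2 \<delta>3
  have "E u \<le> E s \<and> s < T" if s: "u \<le> s" "s \<le> u + \<delta>" for s
  proof
    show "s < T" using s \<delta> by simp
    show "E u \<le> E s"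
    proof (rule DERIV_nonneg_imp_increasing_open[OF s(1)])
      fix x assume x: "u < x" "x < s"
      have "v x \<noteq> 0" using d1(2) x s \<delta> by auto
      then show "\<exists>y. (E has_real_derivative y) (at x) \<and> 0 \<le> y"
        using E_deriv[of x] x s \<delta> u by fastforce
    next
      show "continuous_on {u..s} E"
        by (rule continuous_on_subset[OF E_cont]) (use u s \<delta> in auto)
    qed
  qed
  then show ?thesis using \<delta>(1) by blast
qed

lemma E_persist:
  assumes tm: "0 < tm" "tm \<le> z" "z < T" and Gp: "G (v tm) > 0"
  shows "G (v tm) \<le> E z"
proof (rule ccontr)
  define L where "L = G (v tm)"
  assume "\<not> G (v tm) \<le> E z"
  then have Ez: "E z < L" unfolding L_def by simp
  define B where "B = {s \<in> {tm..z}. E s < L}"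
  define s0 where "s0 = Inf B"
  have Bne: "B \<noteq> {}" using Ez tm unfolding B_def by auto
  have Bbdd: "bdd_below B" unfolding B_def by (rule bdd_belowI[of _ tm]) auto
  have s0_ge: "tm \<le> s0" unfolding s0_def using Bne by (intro cInf_greatest) (auto simp: B_def)
  have zB: "z \<in> B" unfolding B_def using Ez tm by auto
  have s0_le: "s0 \<le> z" unfolding s0_def using zB Bbdd by (rule cInf_lower)
  have pre: "L \<le> E s" if "tm \<le> s" "s < s0" for s
  proof (rule ccontr)
    assume "\<not> L \<le> E s"
    then have "s \<in> B" unfolding B_def using that s0_le by auto
    then have "s0 \<le> s" unfolding s0_def using Bbdd by (rule cInf_lower)
    then show False using that by simp
  qed
  have Es0: "L \<le> E s0"
  proof (cases "s0 = tm")
    case True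
    then show ?thesis unfolding L_def using E_lower[of tm] tm by simp
  next
    case False
    then have lt: "tm < s0" using s0_ge by simp
    have "isCont E s0"
      using continuous_on_interior[OF E_cont, of s0] tm lt s0_le by auto
    then have lim: "(E \<longlongrightarrow> E s0) (at_left s0)"
      by (simp add: isCont_def filterlim_at_split)
    have ev: "eventually (\<lambda>s. L \<le> E s) (at_left s0)"
      using eventually_at_left_real[OF lt] by eventually_elim (auto intro: pre)
    show ?thesis by (rule tendsto_lowerbound[OF lim ev]) simp
  qed
  have s0T: "0 < s0" "s0 < T" using tm s0_ge s0_le by auto
  have nz: "v s0 \<noteq> 0 \<or> v' s0 \<noteq> 0"
  proof (rule ccontr)
    assume "\<not> (v s0 \<noteq> 0 \<or> v' s0 \<noteq> 0)"
    then have "E s0 = 0" using E_zero[OF s0T] p by simp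
    then show False using Es0 Gp unfolding L_def by simp
  qed
  obtain \<delta> where \<delta>: "\<delta> > 0" "\<forall>s. s0 \<le> s \<and> s \<le> s0 + \<delta> \<longrightarrow> E s0 \<le> E s \<and> s < T"
    using E_right[OF s0T nz] by auto
  have "s0 + \<delta> \<le> Inf B"
  proof (rule cInf_greatest[OF Bne])
    fix b assume b: "b \<in> B"
    have "s0 \<le> b" unfolding s0_def using b Bbdd by (rule cInf_lower)
    show "s0 + \<delta> \<le> b"
    proof (rule ccontr)
      assume "\<not> s0 + \<delta> \<le> b"
      then have "E s0 \<le> E b" using \<delta>(2) \<open>s0 \<le> b\<close> by auto
      then show False using b Es0 unfolding B_def by auto
    qed
  qed
  then show False using \<delta>(1) unfolding s0_def by simp
qed

lemma h_nonneg: "t \<in> {0..T} \<Longrightarrow> 0 \<le> h t"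
  using h_pos[of t] h0 by (cases "t = 0") auto

lemma big_before_zero:
  assumes z: "0 < z" "z < T" "v z = 0"
    and C: "C \<ge> 0" "\<forall>u. 0 < u \<and> u \<le> \<Lambda> \<longrightarrow> f u \<le> C"
    and aC: "a powr (p - 1) > C * integral {0..T} h"
  shows "\<exists>tm. 0 < tm \<and> tm \<le> z \<and> v tm > \<Lambda>"
proof (rule ccontr)
  assume contra: "\<not> (\<exists>tm. 0 < tm \<and> tm \<le> z \<and> v tm > \<Lambda>)"
  have T0: "0 \<in> {0..T}" using T_pos by simp
  have "phi 0 = a powr (p - 1)" unfolding phi_def by simp
  then have "v' 0 > 0" using phi_pos[OF T0] a_pos by simp
  then obtain d where d: "d > 0" "\<forall>h>0. 0 + h \<in> {0..T} \<longrightarrow> h < d \<longrightarrow> v 0 < v (0 + h)"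
    using has_real_derivative_pos_inc_right[OF vd[OF T0]] by blast
  define d' where "d' = min d T"
  have d': "0 < d'" "d' \<le> d" "d' \<le> T" unfolding d'_def using d T_pos by auto
  have pos: "v s > 0" if "0 < s" "s < d'" for s
    using d(2)[rule_format, of s] that d' v0 by auto
  have zd: "d' \<le> z" using pos[of z] z by force
  define \<eta> where "\<eta> = d' / 2"
  have \<eta>: "0 < \<eta>" "\<eta> < d'" "v \<eta> > 0" unfolding \<eta>_def using d' pos[of "d'/2"] by auto
  define Z where "Z = {s \<in> {\<eta>..z}. v s = 0}"
  have Zc: "closed Z" unfolding Z_def
    by (intro continuous_closed_preimage_constant continuous_on_subset[OF v_cont]) (use \<eta> z in auto)
  have Zne: "Z \<noteq> {}" unfolding Z_def using z zd \<eta> by auto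
  have Zb: "bdd_below Z" unfolding Z_def by (rule bdd_belowI[of _ \<eta>]) auto
  define z1 where "z1 = Inf Z"
  have z1Z: "z1 \<in> Z" unfolding z1_def using closed_contains_Inf[OF Zne Zb Zc] .
  then have z1: "\<eta> \<le> z1" "z1 \<le> z" "v z1 = 0" unfolding Z_def by auto
  have posz: "v s > 0" if s: "0 < s" "s < z1" for s
  proof (cases "s < d'")
    case True then show ?thesis using pos s by simp
  next
    case False
    then have s\<eta>: "\<eta> \<le> s" using \<eta> by simp
    have notZ: "v x \<noteq> 0" if "\<eta> \<le> x" "x \<le> s" for x
    proof
      assume "v x = 0"
      then have "x \<in> Z" unfolding Z_def using that s z1 by auto
      then have "z1 \<le> x" unfolding z1_def using Zb by (rule cInf_lower)
      then show False using that s by simp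
    qed
    show ?thesis
    proof (rule ccontr)
      assume "\<not> v s > 0"
      then have "v s \<le> 0" by simp
      moreover have "continuous_on {\<eta>..s} v"
        by (rule continuous_on_subset[OF v_cont]) (use \<eta> s z1 z in auto)
      ultimately obtain x where "\<eta> \<le> x" "x \<le> s" "v x = 0"
        using IVT2'[of v s 0 \<eta>] \<eta>(3) s\<eta> by auto
      then show False using notZ by blast
    qed
  qed
  have z1pos: "0 < z1" using z1 \<eta> by simp
  have hint: "h integrable_on {0..t}" if "t \<le> T" "0 \<le> t" for t
    by (rule integrable_on_subinterval[OF h_integrable]) (use that in auto)
  have v'pos: "v' t > 0" if t: "0 < t" "t < z1" for t
  proof -
    have tT: "t \<in> {0..T}" using t z1 z by auto
    have fi: "(\<lambda>s. h s * f (v s)) integrable_on {0..t}"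
      by (rule integrable_on_subinterval[OF int_T]) (use tT in auto)
    have hi: "(\<lambda>s. C * h s) integrable_on {0..t}"
      using integrable_cmul[OF hint[of t], of C] tT by simp
    have "integral {0..t} (\<lambda>s. h s * f (v s)) \<le> integral {0..t} (\<lambda>s. C * h s)"
    proof (rule integral_le[OF fi hi])
      fix s assume s: "s \<in> {0..t}"
      show "h s * f (v s) \<le> C * h s"
      proof (cases "s = 0")
        case True then show ?thesis using h0 by simp
      next
        case False
        then have s0: "0 < s" "s < z1" using s t by auto
        have "0 < v s" using posz[OF s0] .
        moreover have "v s \<le> \<Lambda>"
        proof -
          have "s \<le> z" using s0 z1(2) by linarith
          then show ?thesis using contra s0(1) by (auto simp: not_less)
        qed
        ultimately have "f (v s) \<le> C" using C(2) by auto
        moreover have "h s \<ge> 0" using h_nonneg[of s] s tT by auto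
        ultimately have "h s * f (v s) \<le> h s * C" by (intro mult_left_mono)
        then show ?thesis by (simp add: mult.commute)
      qed
    qed
    also have "\<dots> = C * integral {0..t} h" by simp
    also have "\<dots> \<le> C * integral {0..T} h"
    proof (rule mult_left_mono[OF _ C(1)])
      show "integral {0..t} h \<le> integral {0..T} h"
        by (rule integral_subset_le) (use tT h_integrable hint[of t] h_nonneg in auto)
    qed
    finally have "phi t > 0" unfolding phi_def using aC by simp
    then show ?thesis using phi_pos[OF tT] by simp
  qed
  have "v 0 < v z1"
  proof (rule DERIV_pos_imp_increasing_open[OF z1pos])
    fix x assume x: "0 < x" "x < z1"
    then show "\<exists>y. (v has_real_derivative y) (at x) \<and> 0 < y"
      using vd_at[of x] v'pos[OF x] z1 z by force
  next
    show "continuous_on {0..z1} v"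
      by (rule continuous_on_subset[OF v_cont]) (use z1 z in auto)
  qed
  then show False using v0 z1 by simp
qed

end

theorem lemma2p7:
  fixes N :: nat and p l m \<beta> R K0 K1 \<alpha> \<alpha>1 :: real
    and f g1 g2 K K' :: "real \<Rightarrow> real"
    and v v' :: "real \<Rightarrow> real \<Rightarrow> real"
  assumes N: "N > 2" and p: "1 < p" "p < real N"
    and f_odd: "\<forall>u. u \<noteq> 0 \<longrightarrow> f (- u) = - f u"
    and f_lip: "loc_lipschitz_on (UNIV - {0}) f"
    \<comment> \<open>(H1)\<close>
    and H1_g1: "loc_lipschitz_on UNIV g1" and H1_l: "l > p - 1"
    and H1_eq: "\<exists>U. \<forall>u. \<bar>u\<bar> \<ge> U \<longrightarrow> f u = \<bar>u\<bar> powr (l - 1) * u + g1 u"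
    and H1_lim: "((\<lambda>u. \<bar>g1 u\<bar> / \<bar>u\<bar> powr l) \<longlongrightarrow> 0) at_top"
    \<comment> \<open>(H2)\<close>
    and H2_g2: "loc_lipschitz_on UNIV g2" "g2 0 = 0" and H2_m: "0 < m" "m < 1"
    and H2_eq: "\<exists>\<delta>>0. \<forall>u. u \<noteq> 0 \<and> \<bar>u\<bar> < \<delta> \<longrightarrow>
                   f u = - 1 / (\<bar>u\<bar> powr (m - 1) * u) + g2 u"
    \<comment> \<open>(H3)\<close>
    and H3: "\<beta> > 0" "f \<beta> = 0" "\<forall>u>0. f u = 0 \<longrightarrow> u = \<beta>"
            "\<forall>u. 0 < u \<and> u < \<beta> \<longrightarrow> f u < 0" "\<forall>u>\<beta>. f u > 0"
    \<comment> \<open>(H4)\<close>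
    and R: "R > 0"
    and K_deriv: "\<forall>r\<in>{R..}. (K has_real_derivative K' r) (at r within {R..})"
    and K_cont: "continuous_on {R..} K" "continuous_on {R..} K'"
    and K_pos: "\<forall>r\<in>{R..}. K r > 0"
    and K_ratio: "\<forall>r\<in>{R..}. r * K' r / K r > - ((real N - 1) * p / (p - 1))"
    and K_bounds: "K0 > 0" "K1 > 0"
        "\<forall>r\<in>{R..}. K0 / r powr \<alpha> \<le> K r \<and> K r \<le> K1 / r powr \<alpha>1"
    and alphas: "real N + m * (real N - p) / (p - 1) < \<alpha>1" "\<alpha>1 \<le> \<alpha>"
                "\<alpha> < 2 * (real N - 1)"
    \<comment> \<open>v a is the solution with initial slope a, v' a its derivative\<close>
    and sol: "\<forall>a>0. ivp_solution N p K f a (R powr ((p - real N) / (p - 1))) (v a) (v' a)"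
  shows "\<forall>M. \<exists>A. \<forall>a>A. \<forall>z\<in>{0<..<R powr ((p - real N) / (p - 1))}.
            v a z = 0 \<longrightarrow> \<bar>v' a z\<bar> > M"
  proof -
  have st: "setting N p l m \<beta> R K0 K1 \<alpha> \<alpha>1 f g1 g2 K K'"
    unfolding setting_def using assms by (intro conjI) assumption+
  interpret setting N p l m \<beta> R K0 K1 \<alpha> \<alpha>1 f g1 g2 K K' by (rule st)
  have TT: "R powr ((p - real N) / (p - 1)) = T" unfolding T_def ..
  show ?thesis
  proof
    fix M :: real
    define M' where "M' = max M 0"
    define hT where "hT = hw N p K T"
    have hT: "hT > 0" unfolding hT_def using h_pos[of T] T_pos by simp
    define q' where "q' = p / (p - 1)"
    have q': "q' > 0" unfolding q'_def using p by simp
    define M0 where "M0 = M' powr p / (q' * hT) + 1"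
    have M0: "M0 > 0" unfolding M0_def using hT q' by (simp add: add_nonneg_pos)
    obtain \<Lambda> where \<Lambda>: "\<Lambda> > 0" "\<forall>u\<ge>\<Lambda>. G u \<ge> M0" using G_large by blast
    obtain C where C: "C \<ge> 0" "\<forall>u. 0 < u \<and> u \<le> \<Lambda> \<longrightarrow> f u \<le> C" using f_upper by blast
    define H where "H = integral {0..T} (hw N p K)"
    have H: "H \<ge> 0" unfolding H_def
    proof (rule integral_nonneg[OF h_integrable])
      fix x :: real assume "x \<in> {0..T}"
      then show "0 \<le> hw N p K x" using h_pos[of x] h0 by (cases "x = 0") auto
    qed
    define A where "A = (C * H) powr (1 / (p - 1))"
    have A0: "A \<ge> 0" unfolding A_def by simp
    show "\<exists>A. \<forall>a>A. \<forall>z\<in>{0<..<R powr ((p - real N) / (p - 1))}. v a z = 0 \<longrightarrow> \<bar>v' a z\<bar> > M"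
    proof (intro exI[of _ A] allI impI ballI)
      fix a z assume a: "a > A" and zI: "z \<in> {0<..<R powr ((p - real N) / (p - 1))}" and vz: "v a z = 0"
      have apos: "a > 0" using a A0 by simp
      have aC: "a powr (p - 1) > C * H"
      proof (cases "C * H = 0")
        case True
        have "a powr (p - 1) > 0" using apos by simp
        then show ?thesis unfolding True .
      next
        case False
        then have CH: "C * H > 0" using C(1) H by simp
        have "A powr (p - 1) = C * H" unfolding A_def using CH p by (simp add: powr_powr)
        moreover have "A powr (p - 1) < a powr (p - 1)"
          using a A0 p by (intro powr_less_mono2) auto
        ultimately show ?thesis by simp
      qed
      interpret S: sol N p l m \<beta> R K0 K1 \<alpha> \<alpha>1 f g1 g2 K K' a "v a" "v' a"
      proof (rule sol.intro[OF st], unfold_locales)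
        show "a > 0" using apos .
        show "ivp_solution N p K f a T (v a) (v' a)" using sol apos TT by auto
      qed
      have z: "0 < z" "z < T" using zI TT by auto
      obtain tm where tm: "0 < tm" "tm \<le> z" "v a tm > \<Lambda>"
        using S.big_before_zero[OF z vz C aC[unfolded H_def]] by blast
      have Gt: "G (v a tm) \<ge> M0" using \<Lambda>(2) tm(3) by simp
      have "G (v a tm) \<le> S.E z" using S.E_persist[OF tm(1,2) z(2)] Gt M0 by simp
      also have "S.E z = \<bar>v' a z\<bar> powr p / (q' * hw N p K z)"
        using S.E_zero[OF z vz] unfolding S.q_def q'_def .
      finally have ineq: "M0 \<le> \<bar>v' a z\<bar> powr p / (q' * hw N p K z)" using Gt by simp
      have hz: "hw N p K z > 0" using h_pos z by simp
      have hzT: "hT \<le> hw N p K z" unfolding hT_def using h_mono[of z T] z by simp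
      have "M0 * (q' * hw N p K z) \<le> \<bar>v' a z\<bar> powr p"
        using ineq hz q' by (simp add: field_simps)
      moreover have "M0 * (q' * hT) \<le> M0 * (q' * hw N p K z)"
        using hzT M0 q' by (intro mult_left_mono) auto
      moreover have "M0 * (q' * hT) = M' powr p + q' * hT"
        unfolding M0_def using q' hT by (simp add: field_simps)
      ultimately have big: "\<bar>v' a z\<bar> powr p > M' powr p" using q' hT
        by (smt (verit) mult_pos_pos)
      have "\<bar>v' a z\<bar> > M'"
      proof (rule ccontr)
        assume "\<not> \<bar>v' a z\<bar> > M'"
        then have "\<bar>v' a z\<bar> powr p \<le> M' powr p" using p by (intro powr_mono2) auto
        then show False using big by simp
      qed
      then show "\<bar>v' a z\<bar> > M" unfolding M'_def by simp
    qed
  qed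
qed

end
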